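(* Let $C$ be a circle graph and $K\subseteq V(C)$ an independent set such that $K$ contains at least one vertex of degree at least $2$ in $C$ and no two vertices of $K$ are twins in $C$. Then there exist distinct vertices $a,b\in V(C)\setminus K$ such that $|N_C(a)\cap N_C(b)\cap K|=1$.
   Context: Graphs are finite, simple, undirected. A circle graph is a graph isomorphic to the intersection graph of a finite set of chords of a circle (vertices are chords, two vertices adjacent iff the chords intersect). $N_C(u)$ denotes the neighbourhood of $u$. A set is independent if no two of its vertices are adjacent. Two vertices $u,v$ are twins if $N_C(u)\setminus\{v\}=N_C(v)\setminus\{u\}$. *)

theory Defs
  imports "HOL-Analysis.Analysis"
begin

definition simple_graph :: "'a set \<Rightarrow> ('a \<Rightarrow> 'a \<Rightarrow> bool) \<Rightarrow> bool" where
  "simple_graph V E \<longleftrightarrow> finite V \<and> (\<forall>u v. E u v \<longrightarrow> u \<in> V \<and> v \<in> V)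
     \<and> (\<forall>u v. E u v \<longrightarrow> E v u) \<and> (\<forall>u. \<not> E u u)"

definition nbhd :: "'a set \<Rightarrow> ('a \<Rightarrow> 'a \<Rightarrow> bool) \<Rightarrow> 'a \<Rightarrow> 'a set" where
  "nbhd V E u = {v \<in> V. E u v}"

definition independent :: "('a \<Rightarrow> 'a \<Rightarrow> bool) \<Rightarrow> 'a set \<Rightarrow> bool" where
  "independent E K \<longleftrightarrow> (\<forall>u\<in>K. \<forall>v\<in>K. \<not> E u v)"

definition twins :: "'a set \<Rightarrow> ('a \<Rightarrow> 'a \<Rightarrow> bool) \<Rightarrow> 'a \<Rightarrow> 'a \<Rightarrow> bool" where
  "twins V E u v \<longleftrightarrow> nbhd V E u - {v} = nbhd V E v - {u}"

definition chord :: "complex \<times> complex \<Rightarrow> complex set" where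
  "chord p = closed_segment (fst p) (snd p)"

definition circle_graph :: "'a set \<Rightarrow> ('a \<Rightarrow> 'a \<Rightarrow> bool) \<Rightarrow> bool" where
  "circle_graph V E \<longleftrightarrow> simple_graph V E \<and>
     (\<exists>(c::complex) (r::real) (f :: 'a \<Rightarrow> complex \<times> complex). r > 0 \<and>
        (\<forall>v\<in>V. fst (f v) \<in> sphere c r \<and> snd (f v) \<in> sphere c r \<and> fst (f v) \<noteq> snd (f v)) \<and>
        inj_on (\<lambda>v. chord (f v)) V \<and>
        (\<forall>u\<in>V. \<forall>v\<in>V. u \<noteq> v \<longrightarrow> (E u v \<longleftrightarrow> chord (f u) \<inter> chord (f v) \<noteq> {})))"

end

theory Submission
  imports Defs
begin

definition Lf :: "complex \<times> complex \<Rightarrow> complex \<Rightarrow> real" where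
  "Lf k z = Im (cnj (snd k - fst k) * (z - fst k))"

definition onC :: "complex \<Rightarrow> real \<Rightarrow> complex \<times> complex \<Rightarrow> bool" where
  "onC c r k \<longleftrightarrow> fst k \<in> sphere c r \<and> snd k \<in> sphere c r \<and> fst k \<noteq> snd k"

definition side :: "complex \<times> complex \<Rightarrow> complex \<times> complex \<Rightarrow> bool" where
  "side k x \<longleftrightarrow> (\<forall>z\<in>chord x. Lf k z > 0)"

lemma Lf_aff: "Lf k ((1 - t) *\<^sub>R p + t *\<^sub>R q) = (1 - t) * Lf k p + t * Lf k q"
  unfolding Lf_def scaleR_conv_of_real
  by (simp add: algebra_simps)

lemma Lf_chord: assumes "z \<in> chord k" shows "Lf k z = 0"
proof -
  obtain u where "z = (1 - u) *\<^sub>R fst k + u *\<^sub>R snd k" using assms unfolding chord_def closed_segment_def by blast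
  moreover have "Lf k (fst k) = 0" "Lf k (snd k) = 0"
    unfolding Lf_def by (simp_all add: algebra_simps)
  ultimately show ?thesis using Lf_aff by simp
qed

lemma chord_ball: assumes "onC c r x" shows "chord x \<subseteq> cball c r"
  using assms unfolding onC_def chord_def
  by (meson closed_segment_subset convex_cball sphere_cball subsetD)

lemma Lf_zero_chord:
  assumes "onC c r k" "z \<in> cball c r" "Lf k z = 0"
  shows "z \<in> chord k"
proof -
  define d where "d = snd k - fst k"
  have d0: "d \<noteq> 0" using assms(1) unfolding onC_def d_def by auto
  define w where "w = cnj d * (z - fst k)"
  have "Im w = 0" using assms(3) unfolding Lf_def w_def d_def by simp
  hence wr: "w = of_real (Re w)" by (simp add: complex_eq_iff)
  define t where "t = Re w / (cmod d)^2"
  have "d * w = (cmod d)^2 * (z - fst k)"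
    unfolding w_def by (metis complex_norm_square mult.assoc)
  hence "z - fst k = d * w / (cmod d)^2" using d0 by (simp add: field_simps)
  hence zt: "z = fst k + of_real t * d" unfolding t_def using wr
    by (metis (no_types, lifting) add.commute diff_add_cancel mult.commute of_real_divide of_real_power times_divide_eq_right)
  define u where "u = fst k - c"
  have n1: "(cmod u)^2 = r^2" using assms(1) unfolding onC_def u_def by (simp add: dist_norm norm_minus_commute)
  have "snd k - c = u + d" unfolding u_def d_def by simp
  hence n2: "(cmod (u + d))^2 = r^2" using assms(1) unfolding onC_def by (metis dist_norm mem_sphere norm_minus_commute)
  have "z - c = u + of_real t * d" using zt unfolding u_def by simp
  hence n3: "(cmod (u + of_real t * d))^2 \<le> r^2" using assms(2) 
    by (metis abs_norm_cancel dist_commute dist_norm mem_cball norm_ge_zero power_mono)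
  have ex: "\<And>s. (cmod (u + of_real s * d))^2 = (cmod u)^2 + 2 * s * (Re u * Re d + Im u * Im d) + s^2 * (cmod d)^2"
    by (simp only: cmod_power2) (simp add: power2_eq_square algebra_simps)
  have A: "2 * (Re u * Re d + Im u * Im d) + (cmod d)^2 = 0" using ex[of 1] n1 n2 by simp
  have B: "2 * t * (Re u * Re d + Im u * Im d) + t^2 * (cmod d)^2 \<le> 0" using ex[of t] n1 n3 by simp
  have "t^2 * (cmod d)^2 - t * (cmod d)^2 \<le> 0" using A B
  proof -
    define X where "X = Re u * Re d + Im u * Im d"
    define D where "D = (cmod d)^2"
    have A': "2 * X = 0 - D" using A unfolding X_def D_def by linarith
    have "2 * t * X = t * (2 * X)" by simp
    also have "\<dots> = 0 - t * D" using A' by (simp add: algebra_simps)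
    finally show ?thesis using B unfolding X_def[symmetric] D_def[symmetric] by linarith
  qed
  hence "(t^2 - t) * (cmod d)^2 \<le> 0" by (simp add: algebra_simps)
  moreover have "(cmod d)^2 > 0" using d0 by simp
  ultimately have "t^2 - t \<le> 0" by (simp add: mult_le_0_iff)
  hence "t * (t - 1) \<le> 0" by (simp add: power2_eq_square algebra_simps)
  hence t01: "0 \<le> t" "t \<le> 1" unfolding mult_le_0_iff by linarith+
  have "z = (1 - t) *\<^sub>R fst k + t *\<^sub>R snd k" using zt unfolding d_def scaleR_conv_of_real
    by (simp add: algebra_simps)
  thus ?thesis unfolding chord_def closed_segment_def using t01 by blast
qed

lemma Lf_zero_seg:
  assumes "Lf k p \<le> 0" "0 \<le> Lf k q"
  shows "\<exists>w\<in>closed_segment p q. Lf k w = 0"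
proof (cases "Lf k p = Lf k q")
  case True
  then show ?thesis using assms by (intro bexI[of _ p]) auto
next
  case False
  define s where "s = Lf k p / (Lf k p - Lf k q)"
  have den: "Lf k p - Lf k q < 0" using assms False by linarith
  have s0: "0 \<le> s" unfolding s_def using assms den by (simp add: divide_nonpos_neg)
  have s1: "s \<le> 1" unfolding s_def using assms den by (simp add: divide_le_eq)
  have "Lf k ((1 - s) *\<^sub>R p + s *\<^sub>R q) = Lf k p - s * (Lf k p - Lf k q)"
    unfolding Lf_aff by (simp add: algebra_simps)
  also have "\<dots> = 0" unfolding s_def using den by simp
  finally show ?thesis using s0 s1 unfolding closed_segment_def by blast
qed

lemma Lf_zero_seg':
  assumes "Lf k p * Lf k q \<le> 0"
  shows "\<exists>w\<in>closed_segment p q. Lf k w = 0"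
proof -
  have "(Lf k p \<le> 0 \<and> 0 \<le> Lf k q) \<or> (Lf k q \<le> 0 \<and> 0 \<le> Lf k p)"
    using assms by (auto simp: mult_le_0_iff)
  thus ?thesis using Lf_zero_seg[of k p q] Lf_zero_seg[of k q p] closed_segment_commute by blast
qed

lemma side_alt:
  assumes "onC c r k" "onC c r x" "chord x \<inter> chord k = {}"
  shows "side k x \<or> (\<forall>z\<in>chord x. Lf k z < 0)"
proof (rule ccontr)
  assume "\<not> ?thesis"
  then obtain p q where p: "p \<in> chord x" "Lf k p \<le> 0" and q: "q \<in> chord x" "0 \<le> Lf k q"
    unfolding side_def by (auto simp: not_less)
  then obtain w where w: "w \<in> closed_segment p q" "Lf k w = 0" using Lf_zero_seg by blast
  have "closed_segment p q \<subseteq> chord x" using p q unfolding chord_def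
    by (simp add: closed_segment_subset)
  hence "w \<in> chord x" using w by blast
  hence "w \<in> cball c r" using chord_ball[OF assms(2)] by blast
  hence "w \<in> chord k" using Lf_zero_chord[OF assms(1)] w by blast
  thus False using assms(3) \<open>w \<in> chord x\<close> by blast
qed

lemma conv_P:
  assumes "onC c r k" "onC c r u" "onC c r v" "onC c r x"
    "chord u \<inter> chord k = {}" "chord v \<inter> chord k = {}"
    "chord x \<inter> chord u \<noteq> {}" "chord x \<inter> chord v \<noteq> {}"
    "side k u \<noteq> side k v"
  shows "chord x \<inter> chord k \<noteq> {}"
proof -
  obtain p where p: "p \<in> chord x" "p \<in> chord u" using assms(7) by blast
  obtain q where q: "q \<in> chord x" "q \<in> chord v" using assms(8) by blast
  have su: "Lf k p > 0 \<or> Lf k p < 0" using side_alt[OF assms(1,2,5)] p unfolding side_def by auto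
  have sv: "Lf k q > 0 \<or> Lf k q < 0" using side_alt[OF assms(1,3,6)] q unfolding side_def by auto
  have "Lf k p * Lf k q \<le> 0"
  proof (cases "side k u")
    case True
    hence "Lf k p > 0" using p unfolding side_def by auto
    moreover have "\<not> side k v" using True assms(9) by auto
    hence "Lf k q < 0" using side_alt[OF assms(1,3,6)] q by auto
    ultimately show ?thesis by (simp add: mult_le_0_iff)
  next
    case False
    hence "Lf k p < 0" using side_alt[OF assms(1,2,5)] p by auto
    moreover have "side k v" using False assms(9) by auto
    hence "Lf k q > 0" using q unfolding side_def by auto
    ultimately show ?thesis by (simp add: mult_le_0_iff)
  qed
  then obtain w where w: "w \<in> closed_segment p q" "Lf k w = 0" using Lf_zero_seg' by blast
  have "closed_segment p q \<subseteq> chord x" using p q unfolding chord_def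
    by (simp add: closed_segment_subset)
  hence "w \<in> chord x" using w by blast
  hence "w \<in> cball c r" using chord_ball[OF assms(4)] by blast
  hence "w \<in> chord k" using Lf_zero_chord[OF assms(1)] w by blast
  thus ?thesis using \<open>w \<in> chord x\<close> by blast
qed

lemma aff_mid:
  fixes A B tu tk tv :: real
  assumes "tu \<le> tk" "tk \<le> tv"
  shows "(1 - tk) * A + tk * B \<ge> min ((1 - tu) * A + tu * B) ((1 - tv) * A + tv * B)"
    and "(1 - tk) * A + tk * B \<le> max ((1 - tu) * A + tu * B) ((1 - tv) * A + tv * B)"
proof -
  have e1: "(1 - tk) * A + tk * B - ((1 - tu) * A + tu * B) = (tk - tu) * (B - A)" by (simp add: algebra_simps)
  have e2: "(1 - tv) * A + tv * B - ((1 - tk) * A + tk * B) = (tv - tk) * (B - A)" by (simp add: algebra_simps)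
  have "(tk - tu) * (B - A) \<ge> 0 \<and> (tv - tk) * (B - A) \<ge> 0 \<or> (tk - tu) * (B - A) \<le> 0 \<and> (tv - tk) * (B - A) \<le> 0"
    using assms by (cases "B \<ge> A") (auto intro: mult_nonneg_nonneg mult_nonneg_nonpos)
  thus "(1 - tk) * A + tk * B \<ge> min ((1 - tu) * A + tu * B) ((1 - tv) * A + tv * B)"
    "(1 - tk) * A + tk * B \<le> max ((1 - tu) * A + tu * B) ((1 - tv) * A + tv * B)"
    using e1 e2 by linarith+
qed

lemma mid_sep:
  assumes "onC c r k" "onC c r u" "onC c r v"
    "chord u \<inter> chord k = {}" "chord v \<inter> chord k = {}"
    "(1 - tu) *\<^sub>R x1 + tu *\<^sub>R x2 \<in> chord u"
    "(1 - tv) *\<^sub>R x1 + tv *\<^sub>R x2 \<in> chord v"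
    "(1 - tk) *\<^sub>R x1 + tk *\<^sub>R x2 \<in> chord k"
    "tu \<le> tk" "tk \<le> tv"
  shows "side k u \<noteq> side k v"
proof
  assume eq: "side k u = side k v"
  have z: "(1 - tk) * Lf k x1 + tk * Lf k x2 = 0" using Lf_chord[OF assms(8)] by (simp add: Lf_aff)
  note m = aff_mid[OF assms(9,10), of "Lf k x1" "Lf k x2"]
  show False
  proof (cases "side k u")
    case True
    hence "(1 - tu) * Lf k x1 + tu * Lf k x2 > 0" "(1 - tv) * Lf k x1 + tv * Lf k x2 > 0"
      using assms(6,7) eq unfolding side_def by (auto simp: Lf_aff[symmetric])
    thus False using m(1) z by linarith
  next
    case False
    hence "(1 - tu) * Lf k x1 + tu * Lf k x2 < 0" "(1 - tv) * Lf k x1 + tv * Lf k x2 < 0"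
      using assms(6,7) eq side_alt[OF assms(1,2,4)] side_alt[OF assms(1,3,5)]
      by (auto simp: Lf_aff[symmetric])
    thus False using m(2) z by linarith
  qed
qed

lemma mid_sep':
  assumes "onC c r k" "onC c r u" "onC c r v"
    "chord u \<inter> chord k = {}" "chord v \<inter> chord k = {}"
    "(1 - tu) *\<^sub>R x1 + tu *\<^sub>R x2 \<in> chord u"
    "(1 - tv) *\<^sub>R x1 + tv *\<^sub>R x2 \<in> chord v"
    "(1 - tk) *\<^sub>R x1 + tk *\<^sub>R x2 \<in> chord k"
    "tu \<le> tk \<and> tk \<le> tv \<or> tv \<le> tk \<and> tk \<le> tu"
  shows "side k u \<noteq> side k v"
  using assms mid_sep[OF assms(1-8)] mid_sep[OF assms(1,3,2,5,4,7,6,8)] by metis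

lemma conv_Q:
  assumes "onC c r e" "onC c r f" "onC c r g" "onC c r x"
    "chord e \<inter> chord f = {}" "chord e \<inter> chord g = {}" "chord f \<inter> chord g = {}"
    "chord x \<inter> chord e \<noteq> {}" "chord x \<inter> chord f \<noteq> {}" "chord x \<inter> chord g \<noteq> {}"
  shows "side e f \<noteq> side e g \<or> side f e \<noteq> side f g \<or> side g e \<noteq> side g f"
proof -
  obtain te where te: "(1 - te) *\<^sub>R fst x + te *\<^sub>R snd x \<in> chord e"
    using assms(8) unfolding chord_def closed_segment_def by blast
  obtain tf where tf: "(1 - tf) *\<^sub>R fst x + tf *\<^sub>R snd x \<in> chord f"
    using assms(9) unfolding chord_def closed_segment_def by blast
  obtain tg where tg: "(1 - tg) *\<^sub>R fst x + tg *\<^sub>R snd x \<in> chord g"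
    using assms(10) unfolding chord_def closed_segment_def by blast
  have d1: "chord f \<inter> chord e = {}" "chord g \<inter> chord e = {}" "chord g \<inter> chord f = {}"
    using assms(5-7) by blast+
  have "(te \<le> tf \<and> tf \<le> tg \<or> tg \<le> tf \<and> tf \<le> te) \<or>
        (tf \<le> te \<and> te \<le> tg \<or> tg \<le> te \<and> te \<le> tf) \<or>
        (te \<le> tg \<and> tg \<le> tf \<or> tf \<le> tg \<and> tg \<le> te)" by linarith
  thus ?thesis
    using mid_sep'[OF assms(2) assms(1) assms(3) assms(5) d1(3) te tg tf]
      mid_sep'[OF assms(1) assms(2) assms(3) d1(1) d1(2) tf tg te]
      mid_sep'[OF assms(3) assms(1) assms(2) assms(6) assms(7) te tf tg]
    by blast
qed

lemma seven:
  assumes "onC c r e" "onC c r f" "onC c r g" "onC c r h"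
    "onC c r a" "onC c r b" "onC c r x"
    "chord e \<inter> chord f = {}" "chord e \<inter> chord g = {}" "chord f \<inter> chord g = {}"
    "chord e \<inter> chord h = {}" "chord f \<inter> chord h = {}" "chord g \<inter> chord h = {}"
    "chord a \<inter> chord e \<noteq> {}" "chord a \<inter> chord f \<noteq> {}" "chord a \<inter> chord g \<noteq> {}" "chord a \<inter> chord h = {}"
    "chord b \<inter> chord e \<noteq> {}" "chord b \<inter> chord f \<noteq> {}" "chord b \<inter> chord h \<noteq> {}" "chord b \<inter> chord g = {}"
    "chord x \<inter> chord e \<noteq> {}" "chord x \<inter> chord g \<noteq> {}" "chord x \<inter> chord h \<noteq> {}" "chord x \<inter> chord f = {}"
  shows False
proof -
  have D: "chord f \<inter> chord e = {}" "chord g \<inter> chord e = {}" "chord g \<inter> chord f = {}"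
    "chord h \<inter> chord e = {}" "chord h \<inter> chord f = {}" "chord h \<inter> chord g = {}"
    using assms(8-13) by blast+
  note on = assms(1-7)
  have "side e g \<noteq> side e h \<or> side g e \<noteq> side g h \<or> side h e \<noteq> side h g"
    by (rule conv_Q[of c r e g h x], fact+)
  moreover have "\<not> (side g e \<noteq> side g h)"
  proof
    assume "side g e \<noteq> side g h"
    have "chord b \<inter> chord g \<noteq> {}" by (rule conv_P[of c r g e h b], fact+)
    thus False using assms(21) by blast
  qed
  moreover have "\<not> (side h e \<noteq> side h g)"
  proof
    assume "side h e \<noteq> side h g"
    have "chord a \<inter> chord h \<noteq> {}" by (rule conv_P[of c r h e g a], fact+)
    thus False using assms(17) by blast
  qed
  ultimately have s1: "side e g \<noteq> side e h" by blast
  have "side e f \<noteq> side e g \<or> side f e \<noteq> side f g \<or> side g e \<noteq> side g f"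
    by (rule conv_Q[of c r e f g a], fact+)
  moreover have "\<not> (side f e \<noteq> side f g)"
  proof
    assume "side f e \<noteq> side f g"
    have "chord x \<inter> chord f \<noteq> {}" by (rule conv_P[of c r f e g x], fact+)
    thus False using assms(25) by blast
  qed
  moreover have "\<not> (side g e \<noteq> side g f)"
  proof
    assume "side g e \<noteq> side g f"
    have "chord b \<inter> chord g \<noteq> {}" by (rule conv_P[of c r g e f b], fact+)
    thus False using assms(21) by blast
  qed
  ultimately have s2: "side e f \<noteq> side e g" by blast
  have "side e f \<noteq> side e h \<or> side f e \<noteq> side f h \<or> side h e \<noteq> side h f"
    by (rule conv_Q[of c r e f h b], fact+)
  moreover have "\<not> (side f e \<noteq> side f h)"
  proof
    assume "side f e \<noteq> side f h"
    have "chord x \<inter> chord f \<noteq> {}" by (rule conv_P[of c r f e h x], fact+)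
    thus False using assms(25) by blast
  qed
  moreover have "\<not> (side h e \<noteq> side h f)"
  proof
    assume "side h e \<noteq> side h f"
    have "chord a \<inter> chord h \<noteq> {}" by (rule conv_P[of c r h e f a], fact+)
    thus False using assms(17) by blast
  qed
  ultimately have s3: "side e f \<noteq> side e h" by blast
  show False using s1 s2 s3 by blast
qed

lemma two_elems: assumes "2 \<le> card A" shows "\<exists>a b. a \<in> A \<and> b \<in> A \<and> a \<noteq> b"
proof -
  have "finite A" "A \<noteq> {}" using assms by (auto intro: card_ge_0_finite)
  then obtain a where a: "a \<in> A" by blast
  have "card (A - {a}) \<ge> 1" using assms a \<open>finite A\<close> by simp
  hence "A - {a} \<noteq> {}" by (metis card.empty not_one_le_zero)
  then obtain b where "b \<in> A - {a}" by blast
  thus ?thesis using a by blast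
qed

theorem mainTheorem2:
  fixes V :: "'a set" and E :: "'a \<Rightarrow> 'a \<Rightarrow> bool" and K :: "'a set"
  assumes "circle_graph V E"
    and "K \<subseteq> V"
    and "independent E K"
    and "\<exists>k\<in>K. card (nbhd V E k) \<ge> 2"
    and "\<forall>u\<in>K. \<forall>v\<in>K. u \<noteq> v \<longrightarrow> \<not> twins V E u v"
  shows "\<exists>a b. a \<in> V - K \<and> b \<in> V - K \<and> a \<noteq> b \<and> card (nbhd V E a \<inter> nbhd V E b \<inter> K) = 1"
proof -
  have sg: "simple_graph V E" using assms(1) unfolding circle_graph_def by blast
  have finV: "finite V" and EV: "\<And>u v. E u v \<Longrightarrow> u \<in> V \<and> v \<in> V"
    and Esym: "\<And>u v. E u v \<Longrightarrow> E v u" and Eirr: "\<And>u. \<not> E u u"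
    using sg unfolding simple_graph_def by blast+
  obtain c r \<phi> where rp: "r > 0"
    and onV: "\<forall>v\<in>V. fst (\<phi> v) \<in> sphere c r \<and> snd (\<phi> v) \<in> sphere c r \<and> fst (\<phi> v) \<noteq> snd (\<phi> v)"
    and Eiff: "\<forall>u\<in>V. \<forall>v\<in>V. u \<noteq> v \<longrightarrow> (E u v \<longleftrightarrow> chord (\<phi> u) \<inter> chord (\<phi> v) \<noteq> {})"
    using assms(1) unfolding circle_graph_def by blast
  have onCv: "\<And>v. v \<in> V \<Longrightarrow> onC c r (\<phi> v)" using onV unfolding onC_def by blast
  have M: "\<And>u v. u \<in> V \<Longrightarrow> v \<in> V \<Longrightarrow> u \<noteq> v \<Longrightarrow> (chord (\<phi> u) \<inter> chord (\<phi> v) = {}) \<longleftrightarrow> \<not> E u v"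
    using Eiff by blast
  have indep: "\<And>u v. u \<in> K \<Longrightarrow> v \<in> K \<Longrightarrow> \<not> E u v" using assms(3) unfolding independent_def by blast
  define S where "S x = nbhd V E x \<inter> K" for x
  have Smem: "\<And>x k. k \<in> S x \<longleftrightarrow> k \<in> K \<and> E x k" unfolding S_def nbhd_def using assms(2) by auto
  have finS: "\<And>x. finite (S x)" unfolding S_def nbhd_def using finV by auto
  have key: "S a \<inter> S x \<subseteq> S b \<or> S b \<inter> S x \<subseteq> S a"
    if ab: "a \<in> V - K" "b \<in> V - K" "x \<in> V - K" and ef: "e \<in> S a \<inter> S b" "f \<in> S a \<inter> S b" "e \<noteq> f"
      and ex: "e \<in> S x" "f \<notin> S x" for a b x e f
  proof (rule ccontr)
    assume "\<not> ?thesis"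
    then obtain g h where g: "g \<in> S a" "g \<in> S x" "g \<notin> S b" and h: "h \<in> S b" "h \<in> S x" "h \<notin> S a" by blast
    have K4: "e \<in> K" "f \<in> K" "g \<in> K" "h \<in> K" using ef g h Smem by auto
    have V4: "e \<in> V" "f \<in> V" "g \<in> V" "h \<in> V" using K4 assms(2) by auto
    have d: "e \<noteq> g" "e \<noteq> h" "f \<noteq> g" "f \<noteq> h" "g \<noteq> h" using ef ex g h by auto
    have nk: "a \<noteq> e" "a \<noteq> f" "a \<noteq> g" "a \<noteq> h" "b \<noteq> e" "b \<noteq> f" "b \<noteq> g" "b \<noteq> h"
      "x \<noteq> e" "x \<noteq> f" "x \<noteq> g" "x \<noteq> h" using ab K4 by auto
    have Ea: "E a e" "E a f" "E a g" "\<not> E a h" using ef g h Smem K4 by auto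
    have Eb: "E b e" "E b f" "E b h" "\<not> E b g" using ef g h Smem K4 by auto
    have Ex: "E x e" "E x g" "E x h" "\<not> E x f" using ex g h Smem K4 by auto
    have EK: "\<not> E e f" "\<not> E e g" "\<not> E f g" "\<not> E e h" "\<not> E f h" "\<not> E g h" using K4 indep by auto
    have VV: "a \<in> V" "b \<in> V" "x \<in> V" using ab by auto
    have dis: "chord (\<phi> u) \<inter> chord (\<phi> v) = {}" if "u \<in> V" "v \<in> V" "u \<noteq> v" "\<not> E u v" for u v
      using M that by blast
    have met: "chord (\<phi> u) \<inter> chord (\<phi> v) \<noteq> {}" if "E u v" for u v
      using M[of u v] EV[OF that] Eirr that by blast
    show False
      by (rule seven[OF onCv[OF V4(1)] onCv[OF V4(2)] onCv[OF V4(3)] onCv[OF V4(4)]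
        onCv[OF VV(1)] onCv[OF VV(2)] onCv[OF VV(3)]
        dis[OF V4(1) V4(2) ef(3) EK(1)] dis[OF V4(1) V4(3) d(1) EK(2)] dis[OF V4(2) V4(3) d(3) EK(3)]
        dis[OF V4(1) V4(4) d(2) EK(4)] dis[OF V4(2) V4(4) d(4) EK(5)] dis[OF V4(3) V4(4) d(5) EK(6)]
        met[OF Ea(1)] met[OF Ea(2)] met[OF Ea(3)] dis[OF VV(1) V4(4) nk(4) Ea(4)]
        met[OF Eb(1)] met[OF Eb(2)] met[OF Eb(3)] dis[OF VV(2) V4(3) nk(7) Eb(4)]
        met[OF Ex(1)] met[OF Ex(2)] met[OF Ex(3)] dis[OF VV(3) V4(2) nk(10) Ex(4)]])
  qed
  obtain k0 where k0: "k0 \<in> K" "card (nbhd V E k0) \<ge> 2" using assms(4) by blast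
  then obtain a0 b0 where ab0: "a0 \<in> nbhd V E k0" "b0 \<in> nbhd V E k0" "a0 \<noteq> b0" using two_elems by blast
  have ab0': "a0 \<in> V - K" "b0 \<in> V - K" "k0 \<in> S a0" "k0 \<in> S b0"
    using ab0 k0 indep Esym Smem unfolding nbhd_def by auto
  define P where "P n = (\<exists>a b. a \<in> V - K \<and> b \<in> V - K \<and> a \<noteq> b \<and> S a \<inter> S b \<noteq> {} \<and> card (S a \<inter> S b) = n)" for n
  have P0: "P (card (S a0 \<inter> S b0))" unfolding P_def using ab0 ab0' by blast
  define n0 where "n0 = (LEAST n. P n)"
  have Pn0: "P n0" unfolding n0_def using P0 by (rule LeastI)
  have minn: "\<And>m. P m \<Longrightarrow> n0 \<le> m" unfolding n0_def by (rule Least_le)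
  obtain a b where ab: "a \<in> V - K" "b \<in> V - K" "a \<noteq> b" "S a \<inter> S b \<noteq> {}" "card (S a \<inter> S b) = n0"
    using Pn0 unfolding P_def by blast
  show ?thesis
  proof (cases "n0 = 1")
    case True
    have "nbhd V E a \<inter> nbhd V E b \<inter> K = S a \<inter> S b" unfolding S_def by blast
    hence "card (nbhd V E a \<inter> nbhd V E b \<inter> K) = 1" using ab(5) True by simp
    thus ?thesis using ab(1-3) by blast
  next
    case False
    define I where "I = S a \<inter> S b"
    have finI: "finite I" unfolding I_def using finS by blast
    have "n0 \<noteq> 0" using ab finI unfolding I_def by auto
    hence "2 \<le> card I" using False ab unfolding I_def by linarith
    then obtain e f where ef: "e \<in> I" "f \<in> I" "e \<noteq> f" using two_elems by blast
    have eK: "e \<in> K" "f \<in> K" using ef Smem unfolding I_def by auto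
    have step: False if "e' \<in> I" "f' \<in> I" "e' \<noteq> f'" "y \<in> nbhd V E e'" "y \<notin> nbhd V E f'" for e' f' y
    proof -
      have eK': "e' \<in> K" "f' \<in> K" using that Smem unfolding I_def by auto
      have yV: "y \<in> V" "E e' y" using that unfolding nbhd_def by auto
      have yK: "y \<notin> K" using indep eK' yV by blast
      have ey: "e' \<in> S y" using Smem eK' yV Esym by blast
      have fy: "f' \<notin> S y" using Smem that(5) yV(1) Esym unfolding nbhd_def by blast
      have "S a \<inter> S y \<subseteq> S b \<or> S b \<inter> S y \<subseteq> S a"
        using key[of a b y e' f'] ab yV yK that ey fy unfolding I_def by blast
      thus False
      proof
        assume sub: "S a \<inter> S y \<subseteq> S b"
        have "S a \<inter> S y \<subset> I" using sub fy that unfolding I_def by blast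
        hence lt: "card (S a \<inter> S y) < n0" using finI ab(5) psubset_card_mono unfolding I_def by metis
        have "a \<noteq> y" using that fy unfolding I_def by blast
        hence "P (card (S a \<inter> S y))" unfolding P_def using ab yV yK ey that unfolding I_def by blast
        thus False using minn lt by fastforce
      next
        assume sub: "S b \<inter> S y \<subseteq> S a"
        have "S b \<inter> S y \<subset> I" using sub fy that unfolding I_def by blast
        hence lt: "card (S b \<inter> S y) < n0" using finI ab(5) psubset_card_mono unfolding I_def by metis
        have "b \<noteq> y" using that fy unfolding I_def by blast
        hence "P (card (S b \<inter> S y))" unfolding P_def using ab yV yK ey that unfolding I_def by blast
        thus False using minn lt by fastforce
      qed
    qed
    have "\<not> twins V E e f" using assms(5) eK ef by blast
    moreover have "f \<notin> nbhd V E e" "e \<notin> nbhd V E f" using indep eK unfolding nbhd_def by auto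
    ultimately have "nbhd V E e \<noteq> nbhd V E f" unfolding twins_def by auto
    then obtain y where "y \<in> nbhd V E e \<and> y \<notin> nbhd V E f \<or> y \<in> nbhd V E f \<and> y \<notin> nbhd V E e" by blast
    thus ?thesis using step ef by blast
  qed
qed

end
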